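(* Let $(G,\sigma)$ be a signed graph, $p\ge2$, $K\in\mathbb{R}$, $N\in(0,\infty]$ and $x\in V$. Then $(G,\sigma)$ satisfies $CD_p^\sigma(K,N)$ at $x$ if and only if \[ \Gamma_{p,2}^{\sigma}(f,f)(x)\geq\frac{1}{N}(\Delta_{p}^{\sigma}f(x))^{2}+K(\Gamma^{\sigma}_{p}(f,f)(x))^{\frac{2p-2}{p}} \] holds for every function $f:V\to\mathbb{R}$.
   Context: $G=(V,E)$ is a locally finite simple graph with degrees $d_x$; $\sigma:E\to\{\pm1\}$, $\sigma_{xy}=\sigma(\{x,y\})$. For $p>1$: $\Delta_{p}^{\sigma}f(x)=\frac{1}{d_{x}}\sum_{y\sim x}|\sigma_{xy}f(y)-f(x)|^{p-2}(\sigma_{xy}f(y)-f(x))$ (with $|t|^{p-2}t=0$ at $t=0$); $\Gamma_p^\sigma(f,g)(x)=\frac{1}{2d_{x}}\sum_{y\sim x}|\sigma_{xy}f(y)-f(x)|^{p-2}(\sigma_{xy}f(y)-f(x))(\sigma_{xy}g(y)-g(x))$; $\mathscr{L}^\sigma_{p,f}\varphi(x)=\frac{1}{d_{x}}\sum_{y\sim x}|\sigma_{xy}f(y)-f(x)|^{p-2}(\varphi(y)-\varphi(x))$; $\Gamma_{p,2}^\sigma(f,f)(x)=\frac12\mathscr{L}_{p,f}^\sigma(\Gamma^\sigma_p(f,f))(x)-\Gamma_p^\sigma(f,\Delta_p^\sigma f)(x)$. $(G,\sigma)$ satisfies $CD_p^\sigma(K,N)$ at $x$ if the displayed inequality holds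 for every $f:V\to\mathbb{R}$ with $\sigma_{xy}f(y)-f(x)\neq0$ for every neighbor $y\sim x$ ($\frac1N=0$ if $N=\infty$). *)

theory Defs
  imports "HOL-Library.Extended_Real"
begin

definition signed_graph :: "('a \<Rightarrow> 'a \<Rightarrow> bool) \<Rightarrow> ('a \<Rightarrow> 'a \<Rightarrow> real) \<Rightarrow> bool" where
  "signed_graph adj \<sigma> \<longleftrightarrow>
     (\<forall>x y. adj x y \<longrightarrow> adj y x) \<and> (\<forall>x. \<not> adj x x) \<and>
     (\<forall>x. finite {y. adj x y}) \<and>
     (\<forall>x y. adj x y \<longrightarrow> \<sigma> x y = \<sigma> y x \<and> (\<sigma> x y = 1 \<or> \<sigma> x y = -1))"

definition nbrs :: "('a \<Rightarrow> 'a \<Rightarrow> bool) \<Rightarrow> 'a \<Rightarrow> 'a set" where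
  "nbrs adj x = {y. adj x y}"

definition deg :: "('a \<Rightarrow> 'a \<Rightarrow> bool) \<Rightarrow> 'a \<Rightarrow> real" where
  "deg adj x = real (card (nbrs adj x))"

definition ppow :: "real \<Rightarrow> real \<Rightarrow> real" where
  "ppow p t = (if t = 0 then 0 else \<bar>t\<bar> powr (p - 2) * t)"

text \<open>|t|^q with the usual convention 0^0 = 1 (and 0^q = 0 for q > 0).\<close>
definition apow :: "real \<Rightarrow> real \<Rightarrow> real" where
  "apow t q = (if t = 0 then (if q = 0 then 1 else 0) else \<bar>t\<bar> powr q)"

definition sLap :: "('a \<Rightarrow> 'a \<Rightarrow> bool) \<Rightarrow> ('a \<Rightarrow> 'a \<Rightarrow> real) \<Rightarrow> real \<Rightarrow> ('a \<Rightarrow> real) \<Rightarrow> 'a \<Rightarrow> real" where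
  "sLap adj \<sigma> p f x = (1 / deg adj x) * (\<Sum>y\<in>nbrs adj x. ppow p (\<sigma> x y * f y - f x))"

definition sGamma :: "('a \<Rightarrow> 'a \<Rightarrow> bool) \<Rightarrow> ('a \<Rightarrow> 'a \<Rightarrow> real) \<Rightarrow> real \<Rightarrow> ('a \<Rightarrow> real) \<Rightarrow> ('a \<Rightarrow> real) \<Rightarrow> 'a \<Rightarrow> real" where
  "sGamma adj \<sigma> p f g x = (1 / (2 * deg adj x)) *
     (\<Sum>y\<in>nbrs adj x. ppow p (\<sigma> x y * f y - f x) * (\<sigma> x y * g y - g x))"

definition sL :: "('a \<Rightarrow> 'a \<Rightarrow> bool) \<Rightarrow> ('a \<Rightarrow> 'a \<Rightarrow> real) \<Rightarrow> real \<Rightarrow> ('a \<Rightarrow> real) \<Rightarrow> ('a \<Rightarrow> real) \<Rightarrow> 'a \<Rightarrow> real" where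
  "sL adj \<sigma> p f \<phi> x = (1 / deg adj x) *
     (\<Sum>y\<in>nbrs adj x. apow (\<sigma> x y * f y - f x) (p - 2) * (\<phi> y - \<phi> x))"

definition sGamma2 :: "('a \<Rightarrow> 'a \<Rightarrow> bool) \<Rightarrow> ('a \<Rightarrow> 'a \<Rightarrow> real) \<Rightarrow> real \<Rightarrow> ('a \<Rightarrow> real) \<Rightarrow> 'a \<Rightarrow> real" where
  "sGamma2 adj \<sigma> p f x =
     (1/2) * sL adj \<sigma> p f (sGamma adj \<sigma> p f f) x - sGamma adj \<sigma> p f (sLap adj \<sigma> p f) x"

definition invN :: "ereal \<Rightarrow> real" where
  "invN N = (if N = \<infinity> then 0 else 1 / real_of_ereal N)"

definition CD_ineq :: "('a \<Rightarrow> 'a \<Rightarrow> bool) \<Rightarrow> ('a \<Rightarrow> 'a \<Rightarrow> real) \<Rightarrow> real \<Rightarrow> real \<Rightarrow> ereal \<Rightarrow> ('a \<Rightarrow> real) \<Rightarrow> 'a \<Rightarrow> bool" where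
  "CD_ineq adj \<sigma> p K N f x \<longleftrightarrow>
     sGamma2 adj \<sigma> p f x \<ge> invN N * (sLap adj \<sigma> p f x)^2
        + K * (sGamma adj \<sigma> p f f x) powr ((2 * p - 2) / p)"

definition CD_at :: "('a \<Rightarrow> 'a \<Rightarrow> bool) \<Rightarrow> ('a \<Rightarrow> 'a \<Rightarrow> real) \<Rightarrow> real \<Rightarrow> real \<Rightarrow> ereal \<Rightarrow> 'a \<Rightarrow> bool" where
  "CD_at adj \<sigma> p K N x \<longleftrightarrow>
     (\<forall>f. (\<forall>y. adj x y \<longrightarrow> \<sigma> x y * f y - f x \<noteq> 0) \<longrightarrow> CD_ineq adj \<sigma> p K N f x)"

end

theory Submission
  imports Defs
begin

lemma powr_tendsto_nonneg:
  fixes h :: "'b \<Rightarrow> real"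
  assumes h: "(h \<longlongrightarrow> L) F" and nn: "\<forall>e. 0 \<le> h e" and a: "a > 0"
  shows "((\<lambda>e. h e powr a) \<longlongrightarrow> L powr a) F"
proof (cases "L = 0")
  case True
  then show ?thesis using tendsto_zero_powrI[OF _ tendsto_const, of h F a] h nn a by simp
next
  case False
  then show ?thesis by (intro tendsto_intros h) auto
qed

lemma abs_powr_tendsto:
  fixes h :: "'b \<Rightarrow> real"
  assumes h: "(h \<longlongrightarrow> L) F" and a: "a > 0"
  shows "((\<lambda>e. \<bar>h e\<bar> powr a) \<longlongrightarrow> \<bar>L\<bar> powr a) F"
  by (rule powr_tendsto_nonneg[OF tendsto_rabs[OF h] _ a]) auto

lemma ppow_tendsto:
  fixes h :: "'b \<Rightarrow> real"
  assumes h: "(h \<longlongrightarrow> L) F" and p: "p \<ge> 2"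
  shows "((\<lambda>e. ppow p (h e)) \<longlongrightarrow> ppow p L) F"
proof (cases "p = 2")
  case True
  have "ppow p t = t" for t using True by (simp add: ppow_def)
  then show ?thesis using h by simp
next
  case False
  have eq: "ppow p t = t * \<bar>t\<bar> powr (p - 2)" for t by (simp add: ppow_def)
  show ?thesis unfolding eq
    by (intro tendsto_mult h abs_powr_tendsto) (use p False in auto)
qed

lemma apow_tendsto:
  fixes h :: "'b \<Rightarrow> real"
  assumes h: "(h \<longlongrightarrow> L) F" and p: "p \<ge> 2"
  shows "((\<lambda>e. apow (h e) (p - 2)) \<longlongrightarrow> apow L (p - 2)) F"
proof (cases "p = 2")
  case True
  have "apow t (p - 2) = 1" for t using True by (simp add: apow_def)
  then show ?thesis by simp
next
  case False
  have eq: "apow t (p - 2) = \<bar>t\<bar> powr (p - 2)" for t using False by (simp add: apow_def)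
  show ?thesis unfolding eq
    by (intro abs_powr_tendsto h) (use p False in auto)
qed

lemma sGamma_tendsto:
  assumes h: "\<And>v. ((\<lambda>e. H e v) \<longlongrightarrow> f v) F" and p: "p \<ge> 2"
  shows "((\<lambda>e. sGamma adj \<sigma> p (H e) (H e) v) \<longlongrightarrow> sGamma adj \<sigma> p f f v) F"
  unfolding sGamma_def
  by (intro tendsto_intros ppow_tendsto h p)

lemma sLap_tendsto:
  assumes h: "\<And>v. ((\<lambda>e. H e v) \<longlongrightarrow> f v) F" and p: "p \<ge> 2"
  shows "((\<lambda>e. sLap adj \<sigma> p (H e) v) \<longlongrightarrow> sLap adj \<sigma> p f v) F"
  unfolding sLap_def
  by (intro tendsto_intros ppow_tendsto h p)

lemma sGamma2_tendsto:
  assumes h: "\<And>v. ((\<lambda>e. H e v) \<longlongrightarrow> f v) F" and p: "p \<ge> 2"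
  shows "((\<lambda>e. sGamma2 adj \<sigma> p (H e) v) \<longlongrightarrow> sGamma2 adj \<sigma> p f v) F"
  unfolding sGamma2_def sL_def sGamma_def
  by (intro tendsto_intros ppow_tendsto apow_tendsto sLap_tendsto h p sGamma_tendsto[unfolded sGamma_def])

lemma sGamma_nonneg:
  assumes p: "p \<ge> 2"
  shows "0 \<le> sGamma adj \<sigma> p f f v"
proof -
  have t: "0 \<le> ppow p (\<sigma> v y * f y - f v) * (\<sigma> v y * f y - f v)" for y
  proof -
    have "0 \<le> \<bar>\<sigma> v y * f y - f v\<bar> powr (p - 2) * ((\<sigma> v y * f y - f v) * (\<sigma> v y * f y - f v))"
      by simp
    then show ?thesis by (simp add: ppow_def mult.assoc)
  qed
  have d: "0 \<le> 1 / (2 * deg adj v)" by (simp add: deg_def)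
  show ?thesis unfolding sGamma_def
    by (rule mult_nonneg_nonneg[OF d sum_nonneg]) (rule t)
qed

lemma rhs_tendsto:
  assumes h: "\<And>v. ((\<lambda>e. H e v) \<longlongrightarrow> f v) F" and p: "p \<ge> 2"
  shows "((\<lambda>e. invN N * (sLap adj \<sigma> p (H e) x)^2
        + K * (sGamma adj \<sigma> p (H e) (H e) x) powr ((2 * p - 2) / p)) \<longlongrightarrow>
        invN N * (sLap adj \<sigma> p f x)^2
        + K * (sGamma adj \<sigma> p f f x) powr ((2 * p - 2) / p)) F"
  by (intro tendsto_intros sLap_tendsto h p powr_tendsto_nonneg sGamma_tendsto allI sGamma_nonneg)
     (use p in auto)

theorem proposition4p9:
  fixes adj :: "'a \<Rightarrow> 'a \<Rightarrow> bool" and \<sigma> :: "'a \<Rightarrow> 'a \<Rightarrow> real"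
    and p K :: real and N :: ereal and x :: 'a
  assumes "signed_graph adj \<sigma>" and "p \<ge> 2" and "N > 0"
  shows "CD_at adj \<sigma> p K N x \<longleftrightarrow> (\<forall>f. CD_ineq adj \<sigma> p K N f x)"
proof
  assume R: "\<forall>f. CD_ineq adj \<sigma> p K N f x"
  then show "CD_at adj \<sigma> p K N x" unfolding CD_at_def by blast
next
  assume C: "CD_at adj \<sigma> p K N x"
  have G: "\<forall>x y. adj x y \<longrightarrow> \<sigma> x y = \<sigma> y x \<and> (\<sigma> x y = 1 \<or> \<sigma> x y = -1)"
    and irr: "\<forall>x. \<not> adj x x" and fin: "finite {y. adj x y}"
    using assms(1) unfolding signed_graph_def by blast+
  show "\<forall>f. CD_ineq adj \<sigma> p K N f x"
  proof
    fix f :: "'a \<Rightarrow> real"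
    define g where "g = (\<lambda>v. if adj x v then \<sigma> x v else 0)"
    define H where "H = (\<lambda>e::real. \<lambda>v. f v + e * g v)"
    have h: "((\<lambda>e. H e v) \<longlongrightarrow> f v) (at_right 0)" for v
      unfolding H_def by (auto intro!: tendsto_eq_intros)
    have diff: "\<sigma> x y * H e y - H e x = (\<sigma> x y * f y - f x) + e" if "adj x y" for e y
    proof -
      have "\<sigma> x y = 1 \<or> \<sigma> x y = -1" using G that by blast
      then have "\<sigma> x y * \<sigma> x y = 1" by auto
      moreover have "g x = 0" using irr by (simp add: g_def)
      ultimately show ?thesis using that unfolding H_def g_def by (simp add: algebra_simps)
    qed
    have ev1: "\<forall>y\<in>{y. adj x y}. \<forall>\<^sub>F e in at_right 0. (\<sigma> x y * f y - f x) + e \<noteq> 0"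
    proof
      fix y
      show "\<forall>\<^sub>F e in at_right 0. (\<sigma> x y * f y - f x) + e \<noteq> 0"
      proof (cases "\<sigma> x y * f y - f x = 0")
        case True
        then show ?thesis using eventually_at_right_less[of "0::real"]
          by (auto elim: eventually_mono)
      next
        case False
        then have "0 < \<bar>\<sigma> x y * f y - f x\<bar>" by simp
        from eventually_at_right_real[OF this] show ?thesis
          by (rule eventually_mono) auto
      qed
    qed
    have ev: "\<forall>\<^sub>F e in at_right 0. CD_ineq adj \<sigma> p K N (H e) x"
      using eventually_ball_finite[OF fin ev1]
    proof (rule eventually_mono)
      fix e assume "\<forall>y\<in>{y. adj x y}. \<sigma> x y * f y - f x + e \<noteq> 0"
      then have "\<forall>y. adj x y \<longrightarrow> \<sigma> x y * H e y - H e x \<noteq> 0" using diff by auto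
      then show "CD_ineq adj \<sigma> p K N (H e) x" using C unfolding CD_at_def by blast
    qed
    show "CD_ineq adj \<sigma> p K N f x"
      unfolding CD_ineq_def
      by (rule tendsto_le[OF _ sGamma2_tendsto[OF h assms(2)] rhs_tendsto[OF h assms(2)]])
         (use ev in \<open>auto simp: CD_ineq_def\<close>)
  qed
qed

end
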